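(* Under the standing setting and assumptions (A1)–(A3) described in the context, assume $\mathcal R(X)\neq\emptyset$ for every $X\in\mathcal X$. Then the following are equivalent: (a) $|\mathcal R(X)|=1$ for every $X\in\mathcal X$; (b) $|\mathcal R(X)|=1$ for every $X\in\partial\mathcal A\cap\partial(\mathcal A+\ker(\pi))$; (c) $\partial\mathcal A\cap\partial(\mathcal A+\ker(\pi))\cap(\partial\mathcal A+(\ker(\pi)\setminus\{0\}))=\emptyset$; (d) $\partial\mathcal A\cap(\partial\mathcal A+(\ker(\pi)\setminus\{0\}))\subset\mathrm{int}(\mathcal A+\ker(\pi))$.
   Context: Let $\mathcal X$ be a Hausdorff, first countable, locally convex topological vector space over $\mathbb R$, partially ordered by a partial order $\geq$ with positive cone $\mathcal X_+=\{X\in\mathcal X: X\geq 0\}$. Let $\mathcal M\subset\mathcal X$ be a vector subspace with $1<\dim\mathcal M<\infty$, carrying the relative topology, and let $\pi:\mathcal M\to\mathbb R$ be linear with $\ker(\pi)=\{Z\in\mathcal M:\pi(Z)=0\}$. Standing assumptions: (A1) there is $U\in\mathcal M\cap\mathcal X_+$ with $\pi(U)=1$; (A2) $\mathcal A\subsetneq\mathcal X$ is closed, contains $0$, and satisfies $\mathcal A+\mathcal X_+\subset\mathcal A$; (A3) the map $\rho(X)=\inf\{\pi(Z): Z\in\mathcal M,\ X+Z\in\mathcal A\}$ is finitely valued and continuous on $\mathcal X$. The optimal payoff map is $\mathcal R(X)=\{Z\in\mathcal M: X+Z\in\mathcal A,\ \pi(Z)=\rho(X)\}$; $|\cdot|$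 is cardinality. $\partial$ and $\mathrm{int}$ denote boundary and interior in $\mathcal X$. *)

theory Defs
  imports "HOL-Analysis.Analysis"
begin

text \<open>The type carries a real vector space structure and a topology (t2, first countable);
  the remaining conditions are stated explicitly.\<close>
definition locally_convex_tvs :: "'a::{real_vector, topological_space} itself \<Rightarrow> bool" where
  "locally_convex_tvs _ \<longleftrightarrow>
     continuous_on UNIV (\<lambda>p::'a \<times> 'a. fst p + snd p) \<and>
     continuous_on UNIV (\<lambda>p::real \<times> 'a. fst p *\<^sub>R snd p) \<and>
     (\<forall>W. open W \<and> (0::'a) \<in> W \<longrightarrow> (\<exists>V. open V \<and> convex V \<and> 0 \<in> V \<and> V \<subseteq> W))"

text \<open>A partial order on a real vector space compatible with the linear structure
  (ordered vector space); \<open>ge X Y\<close> means X \<ge> Y.\<close>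
definition vector_partial_order :: "('a::real_vector \<Rightarrow> 'a \<Rightarrow> bool) \<Rightarrow> bool" where
  "vector_partial_order ge \<longleftrightarrow>
     (\<forall>x. ge x x) \<and>
     (\<forall>x y. ge x y \<and> ge y x \<longrightarrow> x = y) \<and>
     (\<forall>x y z. ge x y \<and> ge y z \<longrightarrow> ge x z) \<and>
     (\<forall>x y z. ge x y \<longrightarrow> ge (x + z) (y + z)) \<and>
     (\<forall>x y (c::real). ge x y \<and> 0 \<le> c \<longrightarrow> ge (c *\<^sub>R x) (c *\<^sub>R y))"

definition pos_cone :: "('a::real_vector \<Rightarrow> 'a \<Rightarrow> bool) \<Rightarrow> 'a set" where
  "pos_cone ge = {X. ge X 0}"

definition msum :: "'a::plus set \<Rightarrow> 'a set \<Rightarrow> 'a set" where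
  "msum A B = {a + b | a b. a \<in> A \<and> b \<in> B}"

definition linear_on :: "'a::real_vector set \<Rightarrow> ('a \<Rightarrow> real) \<Rightarrow> bool" where
  "linear_on M f \<longleftrightarrow>
     (\<forall>x\<in>M. \<forall>y\<in>M. f (x + y) = f x + f y) \<and> (\<forall>c. \<forall>x\<in>M. f (c *\<^sub>R x) = c * f x)"

definition kerM :: "'a::real_vector set \<Rightarrow> ('a \<Rightarrow> real) \<Rightarrow> 'a set" where
  "kerM M p = {Z \<in> M. p Z = 0}"

definition rho :: "'a::real_vector set \<Rightarrow> ('a \<Rightarrow> real) \<Rightarrow> 'a set \<Rightarrow> 'a \<Rightarrow> real" where
  "rho M p A X = Inf {p Z | Z. Z \<in> M \<and> X + Z \<in> A}"

definition optR :: "'a::real_vector set \<Rightarrow> ('a \<Rightarrow> real) \<Rightarrow> 'a set \<Rightarrow> 'a \<Rightarrow> 'a set" where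
  "optR M p A X = {Z \<in> M. X + Z \<in> A \<and> p Z = rho M p A X}"

end

theory Submission
  imports Defs
begin

theorem mainTheorem11:
  fixes ge :: "'a::{real_vector, t2_space, first_countable_topology} \<Rightarrow> 'a \<Rightarrow> bool"
    and M :: "'a set" and p :: "'a \<Rightarrow> real" and A :: "'a set" and U :: 'a
  assumes tvs: "locally_convex_tvs TYPE('a)"
    and ord: "vector_partial_order ge"
    and M_sub: "subspace M"
    and M_fin: "\<exists>B. finite B \<and> span B = M"
    and M_dim: "1 < dim M"
    and pi_lin: "linear_on M p"
    and A1: "U \<in> M" "U \<in> pos_cone ge" "p U = 1"
    and A2: "closed A" "A \<noteq> UNIV" "0 \<in> A" "msum A (pos_cone ge) \<subseteq> A"
    and A3_fin: "\<And>X. {p Z | Z. Z \<in> M \<and> X + Z \<in> A} \<noteq> {} \<and>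
                       bdd_below {p Z | Z. Z \<in> M \<and> X + Z \<in> A}"
    and A3_cont: "continuous_on UNIV (rho M p A)"
    and Rne: "\<And>X. optR M p A X \<noteq> {}"
  shows "((\<forall>X. card (optR M p A X) = 1) \<longleftrightarrow>
          (\<forall>X \<in> frontier A \<inter> frontier (msum A (kerM M p)). card (optR M p A X) = 1))
       \<and> ((\<forall>X \<in> frontier A \<inter> frontier (msum A (kerM M p)). card (optR M p A X) = 1) \<longleftrightarrow>
          frontier A \<inter> frontier (msum A (kerM M p))
            \<inter> msum (frontier A) (kerM M p - {0}) = {})
       \<and> ((frontier A \<inter> frontier (msum A (kerM M p))
            \<inter> msum (frontier A) (kerM M p - {0}) = {}) \<longleftrightarrow>
          frontier A \<inter> msum (frontier A) (kerM M p - {0})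
            \<subseteq> interior (msum A (kerM M p)))"
proof -
  define K where "K = kerM M p"
  define r where "r = rho M p A"
  have p_add: "\<And>x y. x \<in> M \<Longrightarrow> y \<in> M \<Longrightarrow> p (x + y) = p x + p y"
    using pi_lin unfolding linear_on_def by blast
  have p_scale: "\<And>c x. x \<in> M \<Longrightarrow> p (c *\<^sub>R x) = c * p x"
    using pi_lin unfolding linear_on_def by blast
  have p0: "p 0 = 0" using p_scale[of U 0] A1 by simp
  have pneg: "\<And>x. x \<in> M \<Longrightarrow> p (- x) = - p x" using p_scale[of _ "-1"] by simp
  have pdiff: "\<And>x y. x \<in> M \<Longrightarrow> y \<in> M \<Longrightarrow> p (x - y) = p x - p y"
    using p_add pneg M_sub by (metis diff_conv_add_uminus subspace_neg)
  have M0: "0 \<in> M" using M_sub subspace_0 by blast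
  have Madd: "\<And>x y. x \<in> M \<Longrightarrow> y \<in> M \<Longrightarrow> x + y \<in> M" using M_sub subspace_add by blast
  have Mneg: "\<And>x. x \<in> M \<Longrightarrow> - x \<in> M" using M_sub subspace_neg by blast
  have Mdiff: "\<And>x y. x \<in> M \<Longrightarrow> y \<in> M \<Longrightarrow> x - y \<in> M" using M_sub subspace_diff by blast
  have Mscale: "\<And>c x. x \<in> M \<Longrightarrow> c *\<^sub>R x \<in> M" using M_sub subspace_scale by blast
  have rho_le: "\<And>X Z. Z \<in> M \<Longrightarrow> X + Z \<in> A \<Longrightarrow> r X \<le> p Z"
  proof -
    fix X Z assume "Z \<in> M" "X + Z \<in> A"
    then show "r X \<le> p Z" unfolding r_def rho_def
      using A3_fin[of X] by (intro cInf_lower) auto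
  qed
  have rho_att: "\<And>X. \<exists>Z\<in>M. X + Z \<in> A \<and> p Z = r X"
    using Rne unfolding optR_def r_def by blast
  have rho_shift: "\<And>X W. W \<in> M \<Longrightarrow> r (X + W) = r X - p W"
  proof -
    fix X W assume W: "W \<in> M"
    obtain Z where Z: "Z \<in> M" "X + Z \<in> A" "p Z = r X" using rho_att by blast
    have "r (X + W) \<le> p (Z - W)"
      using Z W by (intro rho_le) (auto intro: Mdiff simp: algebra_simps)
    hence 1: "r (X + W) \<le> r X - p W" using pdiff Z W by simp
    obtain Z' where Z': "Z' \<in> M" "X + W + Z' \<in> A" "p Z' = r (X + W)" using rho_att by blast
    have "r X \<le> p (W + Z')"
      using Z' W by (intro rho_le) (auto intro: Madd simp: algebra_simps)
    hence "r X \<le> p W + r (X + W)" using p_add Z' W by simp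
    with 1 show "r (X + W) = r X - p W" by simp
  qed
  have rho_U: "\<And>X t. r (X + t *\<^sub>R U) = r X - t"
    using rho_shift Mscale p_scale A1 by simp
  have ordU: "\<And>c. 0 \<le> c \<Longrightarrow> c *\<^sub>R U \<in> pos_cone ge"
  proof -
    fix c :: real assume "0 \<le> c"
    hence "ge (c *\<^sub>R U) (c *\<^sub>R 0)" using ord A1(2) unfolding vector_partial_order_def pos_cone_def
      by blast
    thus "c *\<^sub>R U \<in> pos_cone ge" unfolding pos_cone_def by simp
  qed
  have cone: "\<And>c Y. 0 \<le> c \<Longrightarrow> Y \<in> A \<Longrightarrow> Y + c *\<^sub>R U \<in> A"
    using ordU A2(4) unfolding msum_def by blast
  have A_le: "\<And>X. X \<in> A \<Longrightarrow> r X \<le> 0"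
    using rho_le[of 0] M0 p0 by simp
  have AK: "msum A K = {X. r X \<le> 0}"
  proof safe
    fix X assume "X \<in> msum A K"
    then obtain a k where "a \<in> A" "k \<in> K" "X = a + k" unfolding msum_def by blast
    hence "r X \<le> p (- k)" using Mneg by (intro rho_le) (auto simp: K_def kerM_def)
    thus "r X \<le> 0" using pneg \<open>k \<in> K\<close> by (simp add: K_def kerM_def)
  next
    fix X assume le: "r X \<le> 0"
    obtain Z where Z: "Z \<in> M" "X + Z \<in> A" "p Z = r X" using rho_att by blast
    define Z' where "Z' = Z + (- r X) *\<^sub>R U"
    have Z'M: "Z' \<in> M" unfolding Z'_def using Z A1 Madd Mscale by blast
    have pZ': "p Z' = 0"
    proof -
      have "p Z' = p Z + p ((- r X) *\<^sub>R U)" unfolding Z'_def using Z A1 p_add Mscale by blast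
      also have "\<dots> = 0" using Z A1 p_scale[of U "- r X"] by (simp del: scaleR_minus_left)
      finally show ?thesis .
    qed
    have inA: "X + Z' \<in> A"
    proof -
      have "X + Z + (- r X) *\<^sub>R U \<in> A" using cone[of "- r X" "X + Z"] le Z by simp
      moreover have "X + Z + (- r X) *\<^sub>R U = X + (Z + (- r X) *\<^sub>R U)" by (rule add.assoc)
      ultimately show ?thesis by (metis Z'_def)
    qed
    have "- Z' \<in> K" using Z'M pZ' Mneg pneg by (simp add: K_def kerM_def)
    moreover have "X = (X + Z') + (- Z')" by simp
    ultimately show "X \<in> msum A K" using inA unfolding msum_def by blast
  qed
  have gcont: "\<And>X. continuous_on UNIV (\<lambda>t::real. X + t *\<^sub>R U)"
  proof -
    fix X :: 'a
    have ca: "continuous_on UNIV (\<lambda>q::'a \<times> 'a. fst q + snd q)"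
      and cs: "continuous_on UNIV (\<lambda>q::real \<times> 'a. fst q *\<^sub>R snd q)"
      using tvs unfolding locally_convex_tvs_def by blast+
    have c1: "continuous_on UNIV (\<lambda>t::real. t *\<^sub>R U)"
      using continuous_on_compose[OF continuous_on_Pair[OF continuous_on_id continuous_on_const, of UNIV U] 
          continuous_on_subset[OF cs]] by (simp add: o_def)
    have c2: "continuous_on UNIV (\<lambda>t::real. (X, t *\<^sub>R U))"
      by (intro continuous_on_Pair continuous_on_const c1)
    show "continuous_on UNIV (\<lambda>t::real. X + t *\<^sub>R U)"
      using continuous_on_compose[OF c2 continuous_on_subset[OF ca]] by (simp add: o_def)
  qed
  have int_lemma: "\<And>S Y. S \<subseteq> {X. r X \<le> 0} \<Longrightarrow> Y \<in> interior S \<Longrightarrow> r Y < 0"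
  proof -
    fix S Y assume S: "S \<subseteq> {X. r X \<le> 0}" and Y: "Y \<in> interior S"
    obtain T where T: "open T" "Y \<in> T" "T \<subseteq> S" using Y by (meson interiorE)
    define g where "g = (\<lambda>t::real. Y + t *\<^sub>R U)"
    have "open (g -` T \<inter> UNIV)"
      using continuous_on_open_vimage[OF open_UNIV, THEN iffD1, OF gcont[of Y, folded g_def]] T(1)
      by blast
    hence o: "open (g -` T)" by simp
    have "(0::real) \<in> g -` T" using T by (simp add: g_def)
    then obtain e where e: "e > 0" "ball 0 e \<subseteq> g -` T"
      using o open_contains_ball by metis
    have "- e / 2 \<in> ball 0 e" using e by (simp add: dist_real_def)
    hence "g (- e / 2) \<in> T" using e(2) by (meson subsetD vimageE)
    hence "Y + (- e / 2) *\<^sub>R U \<in> S" using T(3) by (auto simp: g_def)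
    hence "r (Y + (- e / 2) *\<^sub>R U) \<le> 0" using S by (meson mem_Collect_eq subsetD)
    thus "r Y < 0" using rho_U[of Y "- e / 2"] e by linarith
  qed
  have opn: "open {X. r X < 0}"
    using open_Collect_less[OF A3_cont[folded r_def] continuous_on_const] by simp
  have cls: "closed {X. r X \<le> 0}"
    using closed_Collect_le[OF A3_cont[folded r_def] continuous_on_const] by simp
  have intAK: "interior (msum A K) = {X. r X < 0}"
  proof
    show "interior (msum A K) \<subseteq> {X. r X < 0}"
    proof
      fix Y assume "Y \<in> interior (msum A K)"
      hence "r Y < 0" using int_lemma[of "msum A K" Y] AK by simp
      thus "Y \<in> {X. r X < 0}" by simp
    qed
    show "{X. r X < 0} \<subseteq> interior (msum A K)"
      using opn AK by (intro interior_maximal) auto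
  qed
  have frAK: "frontier (msum A K) = {X. r X = 0}"
    unfolding frontier_def intAK using closure_closed[OF cls] AK by auto
  have frA: "\<And>Y. Y \<in> A \<Longrightarrow> r Y = 0 \<Longrightarrow> Y \<in> frontier A"
  proof -
    fix Y assume Y: "Y \<in> A" "r Y = 0"
    have "A \<subseteq> {X. r X \<le> 0}" using A_le by blast
    hence "Y \<notin> interior A" using int_lemma[of A Y] Y(2) by linarith
    moreover have "Y \<in> closure A" using Y(1) closure_subset by blast
    ultimately show "Y \<in> frontier A" unfolding frontier_def by blast
  qed
  have frAsub: "frontier A \<subseteq> A" using frontier_subset_closed A2(1) by blast
  define F where "F = frontier A \<inter> frontier (msum A K)"
  define G where "G = msum (frontier A) (K - {0})"
  have two: "\<And>X z1 z2. z1 \<in> optR M p A X \<Longrightarrow> z2 \<in> optR M p A X \<Longrightarrow> z1 \<noteq> z2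
      \<Longrightarrow> card (optR M p A X) \<noteq> 1"
    by (metis card_1_singletonE singletonD)
  have ab: "(\<forall>X. card (optR M p A X) = 1) \<longrightarrow> (\<forall>X \<in> F. card (optR M p A X) = 1)" by blast
  have bc: "(\<forall>X \<in> F. card (optR M p A X) = 1) \<longrightarrow> F \<inter> G = {}"
  proof (intro impI equalityI subsetI)
    fix X assume b: "\<forall>X \<in> F. card (optR M p A X) = 1" and X: "X \<in> F \<inter> G"
    then have XA: "X \<in> A" and r0: "r X = 0" using frAsub frAK by (auto simp: F_def)
    obtain Y k where Yk: "Y \<in> frontier A" "k \<in> K" "k \<noteq> 0" "X = Y + k"
      using X unfolding G_def msum_def by blast
    have "0 \<in> optR M p A X" using XA r0 M0 p0 by (simp add: optR_def r_def)
    moreover have "- k \<in> optR M p A X"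
      using Yk frAsub r0 Mneg pneg by (auto simp: optR_def r_def[symmetric] K_def kerM_def)
    ultimately have "card (optR M p A X) \<noteq> 1" using two Yk(3) by (metis neg_equal_0_iff_equal)
    with b X show "X \<in> {}" by blast
  qed simp
  have cd: "F \<inter> G = {} \<longrightarrow> frontier A \<inter> G \<subseteq> interior (msum A K)"
  proof (intro impI subsetI)
    fix X assume c: "F \<inter> G = {}" and X: "X \<in> frontier A \<inter> G"
    hence "r X \<le> 0" using frAsub A_le by blast
    moreover have "r X \<noteq> 0" using c X frAK by (auto simp: F_def)
    ultimately show "X \<in> interior (msum A K)" using intAK by simp
  qed
  have da: "frontier A \<inter> G \<subseteq> interior (msum A K) \<longrightarrow> (\<forall>X. card (optR M p A X) = 1)"
  proof (intro impI allI)
    fix X assume d: "frontier A \<inter> G \<subseteq> interior (msum A K)"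
    obtain z1 where z1: "z1 \<in> optR M p A X" using Rne by blast
    show "card (optR M p A X) = 1"
    proof (cases "optR M p A X = {z1}")
      case True thus ?thesis by simp
    next
      case False
      then obtain z2 where z2: "z2 \<in> optR M p A X" "z2 \<noteq> z1" using z1 by blast
      have h1: "z1 \<in> M" "X + z1 \<in> A" "p z1 = r X" using z1 by (auto simp: optR_def r_def)
      have h2: "z2 \<in> M" "X + z2 \<in> A" "p z2 = r X" using z2 by (auto simp: optR_def r_def)
      have r1: "r (X + z1) = 0" using rho_shift h1 by simp
      have r2: "r (X + z2) = 0" using rho_shift h2 by simp
      have f1: "X + z1 \<in> frontier A" using frA h1 r1 by blast
      have f2: "X + z2 \<in> frontier A" using frA h2 r2 by blast
      have "z1 - z2 \<in> K - {0}" using h1 h2 Mdiff pdiff z2(2) by (simp add: K_def kerM_def)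
      moreover have "X + z1 = (X + z2) + (z1 - z2)" by simp
      ultimately have "X + z1 \<in> G" using f2 unfolding G_def msum_def by blast
      hence "X + z1 \<in> interior (msum A K)" using d f1 by blast
      hence False using intAK r1 by simp
      thus ?thesis ..
    qed
  qed
  have gen: "\<And>P Q R S. (P \<longrightarrow> Q) \<Longrightarrow> (Q \<longrightarrow> R) \<Longrightarrow> (R \<longrightarrow> S) \<Longrightarrow> (S \<longrightarrow> P)
     \<Longrightarrow> (P = Q) \<and> (Q = R) \<and> (R = S)" by blast
  show ?thesis using gen[OF ab bc cd da] unfolding F_def G_def K_def .
qed

end
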